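(* Let $X$ be a $\sigma$-monotonically complete Banach lattice, $E\subseteq X$ a closed subspace, and $(x_k,f_k)$ an absolute frame for $E$. Then for each $x\in E$, $\sum_{k=1}^n f_k(x)x_k\xrightarrow{o}x$ in $X$ as $n\to\infty$. In particular, for any Banach lattice $X$, each absolute frame for a closed subspace $E\subseteq X$ has expansions $\sum_{k=1}^n f_k(x)x_k$ that order converge to $x$ in $X^{**}$.
   Context: A Banach lattice is $\sigma$-monotonically complete if every increasing norm bounded sequence of positive elements has a supremum. A (Schauder) frame for a Banach space $E$ is a sequence $(x_k,f_k)\in E\times E^*$ such that $x=\sum_{k=1}^\infty f_k(x)x_k$ (norm convergence) for all $x\in E$. For $E$ a closed subspace of a Banach lattice, the frame is absolute if for each $x\in E$, $\sup_n\|\sum_{k=1}^n|f_k(x)x_k|\|<\infty$. Order convergence $y_n\xrightarrow{o}y$ means there is a net $z_\beta\downarrow0$ such that for every $\beta$ there is $n_\beta$ with $|y_n-y|\le z_\beta$ for all $n\ge n_\beta$. *)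

theory Defs
  imports "HOL-Analysis.Analysis"
begin

definition labs :: "'a::{lattice, uminus} \<Rightarrow> 'a" where
  "labs x = sup x (- x)"

class banach_lattice = banach + ordered_real_vector + lattice +
  assumes lattice_norm: "sup x (- x) \<le> sup y (- y) \<Longrightarrow> norm x \<le> norm y"

text \<open>Least upper / greatest lower bounds in a partial order (the lattice need not be complete).\<close>

definition is_sup_of :: "'a::order set \<Rightarrow> 'a \<Rightarrow> bool" where
  "is_sup_of A s \<longleftrightarrow> (\<forall>a\<in>A. a \<le> s) \<and> (\<forall>u. (\<forall>a\<in>A. a \<le> u) \<longrightarrow> s \<le> u)"

definition is_inf_of :: "'a::order set \<Rightarrow> 'a \<Rightarrow> bool" where
  "is_inf_of A s \<longleftrightarrow> (\<forall>a\<in>A. s \<le> a) \<and> (\<forall>u. (\<forall>a\<in>A. u \<le> a) \<longrightarrow> u \<le> s)"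

definition sigma_monotonically_complete :: "'a::banach_lattice itself \<Rightarrow> bool" where
  "sigma_monotonically_complete _ \<longleftrightarrow>
     (\<forall>y::nat \<Rightarrow> 'a. incseq y \<and> (\<forall>n. 0 \<le> y n) \<and> (\<exists>C. \<forall>n. norm (y n) \<le> C)
        \<longrightarrow> (\<exists>s. is_sup_of (range y) s))"

text \<open>Order convergence.  A net \<open>z\<^sub>\<beta> \<down> 0\<close> is represented by its range: a nonempty
  downward directed set \<open>D\<close> whose infimum is \<open>0\<close>.\<close>

definition downward_directed :: "('a \<Rightarrow> 'a \<Rightarrow> bool) \<Rightarrow> 'a set \<Rightarrow> bool" where
  "downward_directed le D \<longleftrightarrow> (\<forall>a\<in>D. \<forall>b\<in>D. \<exists>c\<in>D. le c a \<and> le c b)"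

definition order_convergent :: "(nat \<Rightarrow> 'a::banach_lattice) \<Rightarrow> 'a \<Rightarrow> bool" where
  "order_convergent y l \<longleftrightarrow>
     (\<exists>D. D \<noteq> {} \<and> downward_directed (\<le>) D \<and> is_inf_of D 0 \<and>
          (\<forall>z\<in>D. \<exists>N. \<forall>n\<ge>N. labs (y n - l) \<le> z))"

definition closed_subspace :: "'a::real_normed_vector set \<Rightarrow> bool" where
  "closed_subspace E \<longleftrightarrow> subspace E \<and> closed E"

definition bounded_linear_on :: "'a::real_normed_vector set \<Rightarrow> ('a \<Rightarrow> real) \<Rightarrow> bool" where
  "bounded_linear_on E f \<longleftrightarrow>
     (\<forall>x\<in>E. \<forall>y\<in>E. f (x + y) = f x + f y) \<and> (\<forall>c. \<forall>x\<in>E. f (c *\<^sub>R x) = c * f x) \<and>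
     (\<exists>C. \<forall>x\<in>E. \<bar>f x\<bar> \<le> C * norm x)"

text \<open>Frames are indexed from \<open>0\<close> instead of \<open>1\<close>.\<close>
definition is_frame :: "'a::real_normed_vector set \<Rightarrow> (nat \<Rightarrow> 'a) \<Rightarrow> (nat \<Rightarrow> 'a \<Rightarrow> real) \<Rightarrow> bool" where
  "is_frame E xs fs \<longleftrightarrow>
     (\<forall>k. xs k \<in> E) \<and> (\<forall>k. bounded_linear_on E (fs k)) \<and>
     (\<forall>x\<in>E. (\<lambda>n. \<Sum>k<n. fs k x *\<^sub>R xs k) \<longlonglongrightarrow> x)"

definition is_absolute_frame :: "'a::banach_lattice set \<Rightarrow> (nat \<Rightarrow> 'a) \<Rightarrow> (nat \<Rightarrow> 'a \<Rightarrow> real) \<Rightarrow> bool" where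
  "is_absolute_frame E xs fs \<longleftrightarrow> is_frame E xs fs \<and>
     (\<forall>x\<in>E. \<exists>C. \<forall>n. norm (\<Sum>k<n. labs (fs k x *\<^sub>R xs k)) \<le> C)"

definition dual_pos :: "('a::banach_lattice \<Rightarrow>\<^sub>L real) \<Rightarrow> bool" where
  "dual_pos f \<longleftrightarrow> (\<forall>x. 0 \<le> x \<longrightarrow> 0 \<le> blinfun_apply f x)"

definition bidual_le :: "(('a::banach_lattice \<Rightarrow>\<^sub>L real) \<Rightarrow>\<^sub>L real) \<Rightarrow> (('a \<Rightarrow>\<^sub>L real) \<Rightarrow>\<^sub>L real) \<Rightarrow> bool" where
  "bidual_le \<phi> \<psi> \<longleftrightarrow> (\<forall>f. dual_pos f \<longrightarrow> blinfun_apply \<phi> f \<le> blinfun_apply \<psi> f)"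

definition bidual_embed :: "'a::banach_lattice \<Rightarrow> (('a \<Rightarrow>\<^sub>L real) \<Rightarrow>\<^sub>L real)" where
  "bidual_embed x = Blinfun (\<lambda>f. blinfun_apply f x)"

text \<open>Order convergence in \<open>X\<^sup>*\<^sup>*\<close>; \<open>|a| \<le> z\<close> is written as \<open>-z \<le> a \<le> z\<close>
  (equivalent in any vector lattice), since the lattice operations of \<open>X\<^sup>*\<^sup>*\<close> are not
  set up as a type class instance.\<close>
definition bidual_order_convergent ::
  "(nat \<Rightarrow> (('a::banach_lattice \<Rightarrow>\<^sub>L real) \<Rightarrow>\<^sub>L real)) \<Rightarrow> (('a \<Rightarrow>\<^sub>L real) \<Rightarrow>\<^sub>L real) \<Rightarrow> bool" where
  "bidual_order_convergent y l \<longleftrightarrow>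
     (\<exists>D. D \<noteq> {} \<and> downward_directed bidual_le D \<and>
          (\<forall>z\<in>D. bidual_le 0 z) \<and> (\<forall>u. (\<forall>z\<in>D. bidual_le u z) \<longrightarrow> bidual_le u 0) \<and>
          (\<forall>z\<in>D. \<exists>N. \<forall>n\<ge>N. bidual_le (- z) (y n - l) \<and> bidual_le (y n - l) z))"

end

theory Submission
  imports Defs
begin


lemma labs_ge: fixes v :: "'a::banach_lattice" shows "v \<le> labs v" "- v \<le> labs v"
  by (auto simp: labs_def)

lemma half_nonneg: fixes v :: "'a::banach_lattice" assumes "0 \<le> v + v" shows "0 \<le> v"
proof -
  have "(1/2::real) *\<^sub>R (v + v) = ((1/2) + (1/2)::real) *\<^sub>R v"
    by (simp only: scaleR_add_left scaleR_add_right)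
  then have "v = (1/2::real) *\<^sub>R (v + v)" by simp
  also have "0 \<le> \<dots>" using assms by (intro scaleR_nonneg_nonneg) auto
  finally show ?thesis .
qed

lemma labs_nonneg: fixes v :: "'a::banach_lattice" shows "0 \<le> labs v"
proof -
  have "v + - v \<le> labs v + labs v" by (intro add_mono labs_ge)
  then have "0 \<le> labs v + labs v" by simp
  then show ?thesis by (rule half_nonneg)
qed

lemma labs_eq_self: fixes v :: "'a::banach_lattice" assumes "0 \<le> v" shows "labs v = v"
proof -
  have "- v \<le> v" using assms order_trans[of "-v" 0 v] by simp
  then show ?thesis by (simp add: labs_def sup_absorb1)
qed

lemma labs_self_imp_nonneg: fixes v :: "'a::banach_lattice" assumes "labs v = v" shows "0 \<le> v"
proof -
  have "- v \<le> v" using labs_ge(2)[of v] assms by simp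
  then have "0 \<le> v + v" using add_right_mono[of "- v" v v] by simp
  then show ?thesis by (rule half_nonneg)
qed

lemma labs_triangle: fixes a b :: "'a::banach_lattice" shows "labs (a + b) \<le> labs a + labs b"
proof -
  have "a + b \<le> labs a + labs b" by (intro add_mono labs_ge)
  moreover have "- (a + b) \<le> labs a + labs b"
    by (simp only: minus_add_distrib) (intro add_mono labs_ge)
  ultimately show ?thesis unfolding labs_def[of "a+b"] by (rule sup_least)
qed

lemma labs_minus: fixes a :: "'a::banach_lattice" shows "labs (- a) = labs a"
  by (simp add: labs_def sup_commute)

lemma labs_labs: fixes a :: "'a::banach_lattice" shows "labs (labs a) = labs a"
  by (rule labs_eq_self[OF labs_nonneg])

lemma labs_diff: fixes a b :: "'a::banach_lattice" shows "labs (labs a - labs b) \<le> labs (a - b)"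
proof -
  have 1: "labs a \<le> labs (a - b) + labs b" using labs_triangle[of "a - b" b] by simp
  have 2: "labs b \<le> labs (a - b) + labs a" using labs_triangle[of "b - a" a] labs_minus[of "a - b"] by simp
  from 1 have "labs a - labs b \<le> labs (a - b)" by (simp add: diff_le_eq)
  moreover from 2 have "- (labs a - labs b) \<le> labs (a - b)" by (simp add: diff_le_eq add.commute)
  ultimately show ?thesis unfolding labs_def[of "labs a - labs b"] by (rule sup_least)
qed

lemma norm_mono_labs: fixes a b :: "'a::banach_lattice" shows "labs a \<le> labs b \<Longrightarrow> norm a \<le> norm b"
  unfolding labs_def by (rule lattice_norm)

lemma norm_labs: fixes a :: "'a::banach_lattice" shows "norm (labs a) = norm a"
  by (metis antisym norm_mono_labs labs_labs order_refl)

lemma cone_closed: fixes v :: "nat \<Rightarrow> 'a::banach_lattice"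
  assumes lim: "v \<longlonglongrightarrow> w" and pos: "eventually (\<lambda>n. 0 \<le> v n) sequentially"
  shows "0 \<le> w"
proof -
  have "eventually (\<lambda>n. norm (labs w - w) \<le> 2 * norm (v n - w)) sequentially"
    using pos
  proof eventually_elim
    case (elim n)
    have "labs w - w = (labs w - labs (v n)) + (v n - w)" using labs_eq_self[OF elim] by simp
    then have "norm (labs w - w) \<le> norm (labs w - labs (v n)) + norm (v n - w)"
      by (metis norm_triangle_ineq)
    moreover have "norm (labs w - labs (v n)) \<le> norm (w - v n)"
      using norm_mono_labs[OF labs_diff] .
    ultimately show ?case by (simp add: norm_minus_commute)
  qed
  moreover have "(\<lambda>n. 2 * norm (v n - w)) \<longlonglongrightarrow> 0"
    using lim by (metis LIM_zero_iff tendsto_mult_right_zero tendsto_norm_zero)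
  ultimately have "norm (labs w - w) \<le> 0"
    by (intro tendsto_le[OF _ _ tendsto_const]) auto
  then have "labs w = w" by simp
  then show ?thesis by (rule labs_self_imp_nonneg)
qed

lemma closed_le: fixes v :: "nat \<Rightarrow> 'a::banach_lattice"
  assumes lim: "v \<longlonglongrightarrow> w" and le: "eventually (\<lambda>n. v n \<le> c) sequentially"
  shows "w \<le> c"
proof -
  have "0 \<le> c - w"
  proof (rule cone_closed[of "\<lambda>n. c - v n"])
    show "(\<lambda>n. c - v n) \<longlonglongrightarrow> c - w" by (intro tendsto_diff tendsto_const lim)
    show "eventually (\<lambda>n. 0 \<le> c - v n) sequentially" using le by eventually_elim simp
  qed
  then show ?thesis by simp
qed



definition ultra_seq :: "nat filter \<Rightarrow> bool" where
  "ultra_seq U \<longleftrightarrow> U \<noteq> bot \<and> U \<le> sequentially \<and> (\<forall>P. eventually P U \<or> eventually (\<lambda>x. \<not> P x) U)"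

lemma ultra_seq_exists: "\<exists>U. ultra_seq U"
proof -
  define A where "A = {{P. eventually P F} | F :: nat filter. F \<noteq> bot \<and> F \<le> sequentially}"
  have "\<exists>M\<in>A. \<forall>X\<in>A. M \<subseteq> X \<longrightarrow> X = M"
  proof (rule subset_Zorn_nonempty)
    show "A \<noteq> {}" unfolding A_def by (auto intro!: exI[of _ sequentially])
  next
    fix C assume C: "C \<noteq> {}" "subset.chain A C"
    define Fs where "Fs = {F :: nat filter. F \<noteq> bot \<and> F \<le> sequentially \<and> {P. eventually P F} \<in> C}"
    have CA: "C \<subseteq> A" and tot: "\<And>X Y. X \<in> C \<Longrightarrow> Y \<in> C \<Longrightarrow> X \<subseteq> Y \<or> Y \<subseteq> X"
      using C(2) by (auto simp: subset_chain_def)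
    have C_eq: "C = (\<lambda>F. {P. eventually P F}) ` Fs"
      using CA unfolding Fs_def A_def by blast
    have Fsne: "Fs \<noteq> {}" using C C_eq by auto
    have base: "\<exists>x\<in>Fs. x \<le> inf F G" if "F \<in> Fs" "G \<in> Fs" for F G
    proof -
      have "{P. eventually P F} \<subseteq> {P. eventually P G} \<or> {P. eventually P G} \<subseteq> {P. eventually P F}"
        using tot that unfolding Fs_def by auto
      then show ?thesis
      proof
        assume "{P. eventually P F} \<subseteq> {P. eventually P G}"
        then have "G \<le> F" by (auto intro!: filter_leI)
        then show ?thesis using that by (intro bexI[of _ G]) (auto simp: le_inf_iff)
      next
        assume "{P. eventually P G} \<subseteq> {P. eventually P F}"
        then have "F \<le> G" by (auto intro!: filter_leI)
        then show ?thesis using that by (intro bexI[of _ F]) (auto simp: le_inf_iff)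
      qed
    qed
    have ev: "eventually P (Inf Fs) \<longleftrightarrow> (\<exists>F\<in>Fs. eventually P F)" for P
      by (rule eventually_Inf_base[OF Fsne base])
    have "Inf Fs \<noteq> bot"
      using ev[of "\<lambda>_. False"] unfolding Fs_def by (auto simp: trivial_limit_def)
    moreover have "Inf Fs \<le> sequentially"
    proof -
      obtain F0 where F0: "F0 \<in> Fs" using Fsne by blast
      then have "Inf Fs \<le> F0" by (rule Inf_lower)
      also have "F0 \<le> sequentially" using F0 unfolding Fs_def by blast
      finally show ?thesis .
    qed
    moreover have "\<Union>C = {P. eventually P (Inf Fs)}"
    proof (rule set_eqI)
      fix P
      have "P \<in> \<Union>C \<longleftrightarrow> (\<exists>F\<in>Fs. eventually P F)" unfolding C_eq by blast
      then show "P \<in> \<Union>C \<longleftrightarrow> P \<in> {P. eventually P (Inf Fs)}" using ev[of P] by simp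
    qed
    ultimately show "\<Union>C \<in> A" unfolding A_def by blast
  qed
  then obtain M where M: "M \<in> A" and Mmax: "\<And>X. X \<in> A \<Longrightarrow> M \<subseteq> X \<Longrightarrow> X = M" by blast
  from M obtain U where MU: "M = {P. eventually P U}" and U: "U \<noteq> bot" "U \<le> sequentially"
    unfolding A_def by blast
  have max: "{P. eventually P F} = {P. eventually P U}"
    if "F \<noteq> bot" "F \<le> sequentially" "{P. eventually P U} \<subseteq> {P. eventually P F}" for F
  proof -
    have "{P. eventually P F} \<in> A" unfolding A_def using that(1,2) by blast
    then show ?thesis using Mmax that(3) unfolding MU by blast
  qed
  have ultra: "eventually P U \<or> eventually (\<lambda>x. \<not> P x) U" for P
  proof (rule disjCI)
    assume nP: "\<not> eventually (\<lambda>x. \<not> P x) U"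
    define F where "F = inf U (principal {x. P x})"
    have evF: "eventually Q F \<longleftrightarrow> eventually (\<lambda>x. P x \<longrightarrow> Q x) U" for Q
      unfolding F_def by (simp add: eventually_inf_principal)
    have "F \<noteq> bot" using nP evF[of "\<lambda>_. False"] by (auto simp: trivial_limit_def)
    moreover have "F \<le> sequentially" using U(2) unfolding F_def by (meson inf.coboundedI1)
    moreover have "{P. eventually P U} \<subseteq> {P. eventually P F}"
    proof
      fix Q assume "Q \<in> {P. eventually P U}"
      then have "eventually Q U" by simp
      then have "eventually (\<lambda>x. P x \<longrightarrow> Q x) U" by (rule eventually_mono) simp
      then show "Q \<in> {P. eventually P F}" using evF by simp
    qed
    ultimately have eq: "{P. eventually P F} = {P. eventually P U}" by (rule max)
    have "eventually P F" using evF by simp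
    then have "P \<in> {P. eventually P F}" by simp
    then show "eventually P U" unfolding eq by simp
  qed
  show ?thesis unfolding ultra_seq_def using U ultra by blast
qed

lemma ultra_seq_tendsto:
  fixes a :: "nat \<Rightarrow> real"
  assumes U: "ultra_seq U" and bnd: "\<And>n. \<bar>a n\<bar> \<le> C"
  shows "(a \<longlongrightarrow> Lim U a) U"
proof -
  have Unb: "U \<noteq> bot" using U by (simp add: ultra_seq_def)
  have "compact {-C..C}" by simp
  moreover have "filtermap a U \<noteq> bot" using Unb by (simp add: filtermap_bot_iff)
  moreover have "eventually (\<lambda>x. x \<in> {-C..C}) (filtermap a U)"
  proof -
    have "\<forall>x. a x \<in> {-C..C}"
    proof
      fix x show "a x \<in> {-C..C}" using abs_le_D1[OF bnd[of x]] abs_le_D2[OF bnd[of x]] by simp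
    qed
    then show ?thesis by (auto simp: eventually_filtermap intro!: always_eventually)
  qed
  ultimately obtain L where L: "inf (nhds L) (filtermap a U) \<noteq> bot"
    unfolding compact_filter by blast
  have "(a \<longlongrightarrow> L) U"
  proof (rule topological_tendstoI)
    fix S :: "real set" assume S: "open S" "L \<in> S"
    show "eventually (\<lambda>x. a x \<in> S) U"
    proof (rule ccontr)
      assume "\<not> eventually (\<lambda>x. a x \<in> S) U"
      then have "eventually (\<lambda>x. a x \<notin> S) U" using U unfolding ultra_seq_def by blast
      then have "eventually (\<lambda>y. y \<notin> S) (filtermap a U)" by (simp add: eventually_filtermap)
      moreover have "eventually (\<lambda>y. y \<in> S) (nhds L)" using S by (rule eventually_nhds_in_open)
      ultimately have "eventually (\<lambda>_. False) (inf (nhds L) (filtermap a U))"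
        unfolding eventually_inf by blast
      then show False using L by (simp add: trivial_limit_def)
    qed
  qed
  moreover then have "Lim U a = L" by (rule tendsto_Lim[OF Unb])
  ultimately show ?thesis by simp
qed



lemma key_lattice_y:
  fixes a :: "nat \<Rightarrow> 'a::banach_lattice"
  assumes "n \<le> N"
  shows "(\<Sum>k<n. labs (a k)) \<le> (\<Sum>k<N. labs (a k))"
  using assms
proof (induction N rule: dec_induct)
  case base
  show ?case by simp
next
  case (step N)
  show ?case using add_increasing2[OF labs_nonneg step.IH] by simp
qed

lemma key_lattice_s:
  fixes a :: "nat \<Rightarrow> 'a::banach_lattice"
  assumes "n \<le> N"
  shows "labs ((\<Sum>k<N. a k) - (\<Sum>k<n. a k)) \<le> (\<Sum>k<N. labs (a k)) - (\<Sum>k<n. labs (a k))"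
  using assms
proof (induction N rule: dec_induct)
  case base
  show ?case by (simp add: labs_eq_self)
next
  case (step N)
    have "labs ((\<Sum>k<Suc N. a k) - (\<Sum>k<n. a k)) = labs (((\<Sum>k<N. a k) - (\<Sum>k<n. a k)) + a N)"
      by (simp add: algebra_simps)
    also have "\<dots> \<le> labs ((\<Sum>k<N. a k) - (\<Sum>k<n. a k)) + labs (a N)" by (rule labs_triangle)
    also have "\<dots> \<le> ((\<Sum>k<N. labs (a k)) - (\<Sum>k<n. labs (a k))) + labs (a N)"
      using step.IH by (rule add_right_mono)
    also have "\<dots> = (\<Sum>k<Suc N. labs (a k)) - (\<Sum>k<n. labs (a k))" by (simp add: algebra_simps)
    finally show ?case .
qed

lemma part1:
  fixes a :: "nat \<Rightarrow> 'a::banach_lattice"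
  assumes smc: "sigma_monotonically_complete TYPE('a)"
    and lim: "(\<lambda>n. \<Sum>k<n. a k) \<longlonglongrightarrow> x"
    and bnd: "\<And>n. norm (\<Sum>k<n. labs (a k)) \<le> C"
  shows "order_convergent (\<lambda>n. \<Sum>k<n. a k) x"
proof -
  define s where "s n = (\<Sum>k<n. a k)" for n
  define y where "y n = (\<Sum>k<n. labs (a k))" for n
  have ks: "n \<le> N \<Longrightarrow> labs (s N - s n) \<le> y N - y n" for n N
    unfolding s_def y_def by (rule key_lattice_s)
  have ky: "n \<le> N \<Longrightarrow> y n \<le> y N" for n N
    unfolding y_def by (rule key_lattice_y)
  have inc: "incseq y" using ky by (simp add: incseq_def)
  have pos: "0 \<le> y n" for n using ky[of 0 n] by (simp add: y_def)
  have bnd': "\<exists>C. \<forall>n. norm (y n) \<le> C" using bnd unfolding y_def by blast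
  have "incseq y \<and> (\<forall>n. 0 \<le> y n) \<and> (\<exists>C. \<forall>n. norm (y n) \<le> C)" using inc pos bnd' by blast
  then have "\<exists>S. is_sup_of (range y) S"
    by (rule smc[unfolded sigma_monotonically_complete_def, rule_format])
  then obtain S where S: "is_sup_of (range y) S" by blast
  have yS: "y n \<le> S" for n using S unfolding is_sup_of_def by blast
  have tail: "labs (s n - x) \<le> S - y n" for n
  proof -
    have ev: "eventually (\<lambda>N. labs (s N - s n) \<le> S - y n) sequentially"
      unfolding eventually_sequentially
    proof (intro exI allI impI)
      fix N assume "n \<le> N"
      then have "labs (s N - s n) \<le> y N - y n" by (rule ks)
      also have "\<dots> \<le> S - y n" using yS[of N] by (simp add: diff_right_mono)
      finally show "labs (s N - s n) \<le> S - y n" .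
    qed
    have l1: "x - s n \<le> S - y n"
    proof (rule closed_le[of "\<lambda>N. s N - s n"])
      show "(\<lambda>N. s N - s n) \<longlonglongrightarrow> x - s n" using lim unfolding s_def by (intro tendsto_diff tendsto_const)
      show "eventually (\<lambda>N. s N - s n \<le> S - y n) sequentially"
        using ev by eventually_elim (rule order_trans[OF labs_ge(1)])
    qed
    have l2: "s n - x \<le> S - y n"
    proof (rule closed_le[of "\<lambda>N. s n - s N"])
      show "(\<lambda>N. s n - s N) \<longlonglongrightarrow> s n - x" using lim unfolding s_def by (intro tendsto_diff tendsto_const)
      show "eventually (\<lambda>N. s n - s N \<le> S - y n) sequentially"
        using ev by eventually_elim (metis labs_ge(2) minus_diff_eq order_trans)
    qed
    show ?thesis unfolding labs_def using l1 l2 by (simp add: sup_least)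
  qed
  define D where "D = range (\<lambda>m. S - y m)"
  have "D \<noteq> {}" by (simp add: D_def)
  moreover have "downward_directed (\<le>) D"
    unfolding downward_directed_def
  proof (intro ballI)
    fix p q assume "p \<in> D" "q \<in> D"
    then obtain i j where pq: "p = S - y i" "q = S - y j" by (auto simp: D_def)
    have "S - y (max i j) \<le> S - y i" "S - y (max i j) \<le> S - y j"
      by (simp_all add: ky diff_left_mono)
    then show "\<exists>c\<in>D. c \<le> p \<and> c \<le> q" unfolding pq D_def by blast
  qed
  moreover have "is_inf_of D 0"
    unfolding is_inf_of_def
  proof (intro conjI allI impI ballI)
    fix p assume "p \<in> D"
    then obtain m where "p = S - y m" by (auto simp: D_def)
    then show "0 \<le> p" using yS[of m] by simp
  next
    fix u assume u: "\<forall>a\<in>D. u \<le> a"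
    have "\<forall>a\<in>range y. a \<le> S - u"
    proof
      fix a assume "a \<in> range y"
      then obtain m where am: "a = y m" by blast
      have "u \<le> S - y m" using u unfolding D_def by blast
      then show "a \<le> S - u" unfolding am by (simp add: le_diff_eq add.commute)
    qed
    then have "S \<le> S - u" using S by (simp add: is_sup_of_def)
    then show "u \<le> 0" by (simp add: le_diff_eq)
  qed
  moreover have "\<forall>z\<in>D. \<exists>N. \<forall>n\<ge>N. labs (s n - x) \<le> z"
  proof
    fix p assume "p \<in> D"
    then obtain m where pm: "p = S - y m" by (auto simp: D_def)
    show "\<exists>N. \<forall>n\<ge>N. labs (s n - x) \<le> p"
    proof (intro exI allI impI)
      fix n assume "m \<le> n"
      then have "S - y n \<le> S - y m" using ky by (simp add: diff_left_mono)
      then show "labs (s n - x) \<le> p" unfolding pm using tail[of n] by (rule order_trans[rotated])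
    qed
  qed
  ultimately show ?thesis unfolding order_convergent_def s_def by blast
qed



lemma embed_apply: "blinfun_apply (bidual_embed v) g = blinfun_apply g v"
  unfolding bidual_embed_def
  by (subst bounded_linear_Blinfun_apply) (auto intro: blinfun.bounded_linear_left)

lemma dual_pos_mono: "dual_pos g \<Longrightarrow> v \<le> w \<Longrightarrow> blinfun_apply g v \<le> blinfun_apply g w"
  unfolding dual_pos_def
  by (metis blinfun.diff_right diff_ge_0_iff_ge)

lemma dual_pos_abs: "dual_pos g \<Longrightarrow> \<bar>blinfun_apply g v\<bar> \<le> blinfun_apply g (labs v)"
proof -
  assume g: "dual_pos g"
  have "blinfun_apply g v \<le> blinfun_apply g (labs v)" by (rule dual_pos_mono[OF g labs_ge(1)])
  moreover have "blinfun_apply g (- v) \<le> blinfun_apply g (labs v)" by (rule dual_pos_mono[OF g labs_ge(2)])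
  ultimately show ?thesis by (simp add: blinfun.minus_right)
qed

lemma part2:
  fixes a :: "nat \<Rightarrow> 'a::banach_lattice"
  assumes lim: "(\<lambda>n. \<Sum>k<n. a k) \<longlonglongrightarrow> x"
    and bnd: "\<And>n. norm (\<Sum>k<n. labs (a k)) \<le> C"
  shows "bidual_order_convergent (\<lambda>n. bidual_embed (\<Sum>k<n. a k)) (bidual_embed x)"
proof -
  define s where "s n = (\<Sum>k<n. a k)" for n
  define y where "y n = (\<Sum>k<n. labs (a k))" for n
  have slim: "s \<longlonglongrightarrow> x" using lim by (simp add: s_def[abs_def])
  have ks: "n \<le> N \<Longrightarrow> labs (s N - s n) \<le> y N - y n" for n N
    unfolding s_def y_def by (rule key_lattice_s)
  have ky: "n \<le> N \<Longrightarrow> y n \<le> y N" for n N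
    unfolding y_def by (rule key_lattice_y)
  have yb: "norm (y n) \<le> C" for n unfolding y_def by (rule bnd)
  have C0: "0 \<le> C" using yb[of 0] norm_ge_zero order_trans by blast
  obtain U where U: "ultra_seq U" using ultra_seq_exists by blast
  have Unb: "U \<noteq> bot" and Useq: "U \<le> sequentially" using U by (auto simp: ultra_seq_def)
  have gb: "\<bar>blinfun_apply g (y N)\<bar> \<le> norm g * C" for g :: "'a \<Rightarrow>\<^sub>L real" and N
    using norm_blinfun[of g "y N"] yb[of N]
    by (metis dual_order.trans mult_left_mono norm_ge_zero real_norm_def)
  define Sf where "Sf g = Lim U (\<lambda>N. blinfun_apply g (y N))" for g :: "'a \<Rightarrow>\<^sub>L real"
  have tU: "((\<lambda>N. blinfun_apply g (y N)) \<longlongrightarrow> Sf g) U" for g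
    unfolding Sf_def by (rule ultra_seq_tendsto[OF U gb])
  have blS: "bounded_linear Sf"
  proof (rule bounded_linear_intro[where K = C])
    fix g h :: "'a \<Rightarrow>\<^sub>L real"
    have "((\<lambda>N. blinfun_apply (g + h) (y N)) \<longlongrightarrow> Sf g + Sf h) U"
      using tendsto_add[OF tU[of g] tU[of h]] by (simp add: blinfun.add_left)
    then show "Sf (g + h) = Sf g + Sf h" using tendsto_unique[OF Unb tU[of "g + h"]] by blast
  next
    fix r :: real and g :: "'a \<Rightarrow>\<^sub>L real"
    have "((\<lambda>N. blinfun_apply (r *\<^sub>R g) (y N)) \<longlongrightarrow> r *\<^sub>R Sf g) U"
      using tendsto_scaleR[OF tendsto_const[of r] tU[of g]] by (simp add: blinfun.scaleR_left)
    then show "Sf (r *\<^sub>R g) = r *\<^sub>R Sf g" using tendsto_unique[OF Unb tU[of "r *\<^sub>R g"]] by blast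
  next
    fix g :: "'a \<Rightarrow>\<^sub>L real"
    have "\<bar>Sf g\<bar> \<le> norm g * C"
      by (rule tendsto_le[OF Unb tendsto_const tendsto_rabs[OF tU[of g]]]) (simp add: gb)
    then show "norm (Sf g) \<le> norm g * C" by simp
  qed
  define z where "z m = Blinfun Sf - bidual_embed (y m)" for m
  have zap: "blinfun_apply (z m) g = Sf g - blinfun_apply g (y m)" for m g
    unfolding z_def by (simp add: blinfun.diff_left bounded_linear_Blinfun_apply[OF blS] embed_apply)
  have conv: "(\<lambda>N. blinfun_apply g (y N)) \<longlonglongrightarrow> Sf g" if g: "dual_pos g" for g
  proof -
    have inc: "incseq (\<lambda>N. blinfun_apply g (y N))"
      unfolding incseq_def using dual_pos_mono[OF g ky] by blast
    have "bdd_above (range (\<lambda>N. blinfun_apply g (y N)))"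
      using gb[of g] by (auto intro!: bdd_aboveI[of _ "norm g * C"] simp: abs_le_iff)
    then have L: "(\<lambda>N. blinfun_apply g (y N)) \<longlonglongrightarrow> (SUP N. blinfun_apply g (y N))"
      using inc by (rule LIMSEQ_incseq_SUP)
    then have "((\<lambda>N. blinfun_apply g (y N)) \<longlongrightarrow> (SUP N. blinfun_apply g (y N))) U"
      by (rule tendsto_mono[OF Useq])
    then have "Sf g = (SUP N. blinfun_apply g (y N))" using tendsto_unique[OF Unb tU[of g]] by blast
    then show ?thesis using L by simp
  qed
  have yle: "blinfun_apply g (y m) \<le> Sf g" if g: "dual_pos g" for g m
  proof -
    have "incseq (\<lambda>N. blinfun_apply g (y N))"
      unfolding incseq_def using dual_pos_mono[OF g ky] by blast
    then show ?thesis using incseq_le[OF _ conv[OF g]] by blast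
  qed
  define D where "D = range z"
  have "D \<noteq> {}" by (simp add: D_def)
  moreover have "downward_directed bidual_le D"
    unfolding downward_directed_def D_def
  proof (clarsimp)
    fix i j
    show "\<exists>m. bidual_le (z m) (z i) \<and> bidual_le (z m) (z j)"
      by (rule exI[of _ "max i j"]) (auto simp: bidual_le_def zap intro!: dual_pos_mono ky)
  qed
  moreover have "\<forall>w\<in>D. bidual_le 0 w"
    unfolding D_def by (auto simp: bidual_le_def zap yle)
  moreover have "\<forall>u. (\<forall>w\<in>D. bidual_le u w) \<longrightarrow> bidual_le u 0"
  proof (intro allI impI)
    fix u assume u: "\<forall>w\<in>D. bidual_le u w"
    show "bidual_le u 0" unfolding bidual_le_def
    proof (intro allI impI)
      fix g :: "'a \<Rightarrow>\<^sub>L real" assume g: "dual_pos g"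
      have "\<And>m. blinfun_apply u g \<le> Sf g - blinfun_apply g (y m)"
        using u g by (auto simp: D_def bidual_le_def zap)
      moreover have "(\<lambda>m. Sf g - blinfun_apply g (y m)) \<longlonglongrightarrow> Sf g - Sf g"
        by (intro tendsto_intros conv g)
      ultimately have "blinfun_apply u g \<le> 0"
        by (intro tendsto_le[OF _ _ tendsto_const]) auto
      then show "blinfun_apply u g \<le> blinfun_apply 0 g" by simp
    qed
  qed
  moreover have "\<forall>w\<in>D. \<exists>N. \<forall>n\<ge>N. bidual_le (- w) (bidual_embed (s n) - bidual_embed x) \<and>
                                     bidual_le (bidual_embed (s n) - bidual_embed x) w"
    unfolding D_def
  proof (clarsimp)
    fix m
    have main: "\<bar>blinfun_apply g (s n) - blinfun_apply g x\<bar> \<le> Sf g - blinfun_apply g (y m)"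
      if g: "dual_pos g" and n: "m \<le> n" for g :: "'a \<Rightarrow>\<^sub>L real" and n
    proof (rule tendsto_le[OF trivial_limit_sequentially])
      show "(\<lambda>N. blinfun_apply g (y N) - blinfun_apply g (y m)) \<longlonglongrightarrow> Sf g - blinfun_apply g (y m)"
        by (intro tendsto_intros conv g)
      have "(\<lambda>N. blinfun_apply g (s N)) \<longlonglongrightarrow> blinfun_apply g x"
        by (rule blinfun.tendsto[OF tendsto_const slim])
      then show "(\<lambda>N. \<bar>blinfun_apply g (s n) - blinfun_apply g (s N)\<bar>) \<longlonglongrightarrow> \<bar>blinfun_apply g (s n) - blinfun_apply g x\<bar>"
        by (rule tendsto_rabs[OF tendsto_diff[OF tendsto_const]])
      show "eventually (\<lambda>N. \<bar>blinfun_apply g (s n) - blinfun_apply g (s N)\<bar>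
                \<le> blinfun_apply g (y N) - blinfun_apply g (y m)) sequentially"
        unfolding eventually_sequentially
      proof (intro exI allI impI)
        fix N assume N: "n \<le> N"
        have "\<bar>blinfun_apply g (s n) - blinfun_apply g (s N)\<bar> = \<bar>blinfun_apply g (s N - s n)\<bar>"
          by (simp add: blinfun.diff_right)
        also have "\<dots> \<le> blinfun_apply g (labs (s N - s n))" by (rule dual_pos_abs[OF g])
        also have "\<dots> \<le> blinfun_apply g (y N - y m)"
          using ks[OF N] ky[OF n] by (intro dual_pos_mono[OF g]) (meson diff_left_mono order_trans)
        also have "\<dots> = blinfun_apply g (y N) - blinfun_apply g (y m)" by (simp add: blinfun.diff_right)
        finally show "\<bar>blinfun_apply g (s n) - blinfun_apply g (s N)\<bar>
                \<le> blinfun_apply g (y N) - blinfun_apply g (y m)" .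
      qed
    qed
    show "\<exists>N. \<forall>n\<ge>N. bidual_le (- z m) (bidual_embed (s n) - bidual_embed x) \<and>
                     bidual_le (bidual_embed (s n) - bidual_embed x) (z m)"
    proof (intro exI allI impI conjI)
      fix n assume n: "m \<le> n"
      show "bidual_le (- z m) (bidual_embed (s n) - bidual_embed x)"
        unfolding bidual_le_def
      proof (intro allI impI)
        fix g :: "'a \<Rightarrow>\<^sub>L real" assume g: "dual_pos g"
        show "blinfun_apply (- z m) g \<le> blinfun_apply (bidual_embed (s n) - bidual_embed x) g"
          using abs_le_D2[OF main[OF g n]]
          by (simp add: zap blinfun.minus_left blinfun.diff_left embed_apply)
      qed
      show "bidual_le (bidual_embed (s n) - bidual_embed x) (z m)"
        unfolding bidual_le_def
      proof (intro allI impI)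
        fix g :: "'a \<Rightarrow>\<^sub>L real" assume g: "dual_pos g"
        show "blinfun_apply (bidual_embed (s n) - bidual_embed x) g \<le> blinfun_apply (z m) g"
          using abs_le_D1[OF main[OF g n]]
          by (simp add: zap blinfun.diff_left embed_apply)
      qed
    qed
  qed
  ultimately show ?thesis unfolding bidual_order_convergent_def s_def by blast
qed


theorem proposition3p17:
  fixes E :: "'a::banach_lattice set"
    and xs :: "nat \<Rightarrow> 'a" and fs :: "nat \<Rightarrow> 'a \<Rightarrow> real"
  assumes "closed_subspace E"
    and "is_absolute_frame E xs fs"
  shows "(sigma_monotonically_complete TYPE('a) \<longrightarrow>
            (\<forall>x\<in>E. order_convergent (\<lambda>n. \<Sum>k<n. fs k x *\<^sub>R xs k) x))
       \<and> (\<forall>x\<in>E. bidual_order_convergent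
                   (\<lambda>n. bidual_embed (\<Sum>k<n. fs k x *\<^sub>R xs k)) (bidual_embed x))"
proof -
  have fr: "is_frame E xs fs"
    and ab: "\<forall>x\<in>E. \<exists>C. \<forall>n. norm (\<Sum>k<n. labs (fs k x *\<^sub>R xs k)) \<le> C"
    using assms(2) unfolding is_absolute_frame_def by auto
  have conv: "\<And>x. x \<in> E \<Longrightarrow> (\<lambda>n. \<Sum>k<n. fs k x *\<^sub>R xs k) \<longlonglongrightarrow> x"
    using fr unfolding is_frame_def by blast
  show ?thesis
  proof (intro conjI impI ballI)
    fix x assume smc: "sigma_monotonically_complete TYPE('a)" and x: "x \<in> E"
    obtain C where C: "\<And>n. norm (\<Sum>k<n. labs (fs k x *\<^sub>R xs k)) \<le> C" using ab x by blast
    show "order_convergent (\<lambda>n. \<Sum>k<n. fs k x *\<^sub>R xs k) x"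
      by (rule part1[where a = "\<lambda>k. fs k x *\<^sub>R xs k", OF smc conv[OF x] C])
  next
    fix x assume x: "x \<in> E"
    obtain C where C: "\<And>n. norm (\<Sum>k<n. labs (fs k x *\<^sub>R xs k)) \<le> C" using ab x by blast
    show "bidual_order_convergent (\<lambda>n. bidual_embed (\<Sum>k<n. fs k x *\<^sub>R xs k)) (bidual_embed x)"
      by (rule part2[where a = "\<lambda>k. fs k x *\<^sub>R xs k", OF conv[OF x] C])
  qed
qed

end
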